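(* Assume (h) and (R-q) with $q=4$, and fix $h\in(0,h_0]$. (i) Let $p\ge4$ and let $(R_t)_{t\in\pi_h}$ be an $(\mathcal F_t)$-adapted sequence in $L^p$ with $\sup_{t\in\pi_h}\|1_{\{t\le\tau_h\}}R_t\|_{L^p}<\infty$. Then the sequence $(1_{\{t\le\tau_h\}}R_t)_{t\in\pi_h}$ belongs to $\mathcal V(\tau_h)$ and has finite norm $\|\cdot\|_{\tau_h}$. (ii) Every $S\in\mathcal V(\tau_h)$ with $\|S\|_{\tau_h}<\infty$ satisfies $\big(\frac1{1-3L_fh}\big)^{t/h}1_{\{t\le\tau_h\}}S_t^2\to0$ in $L^1$ as $t\to\infty$, $t\in\pi_h$.
   Context: $(\Omega,\mathcal F,(\mathcal F_t)_{t\ge0},\mathbb P)$ is a filtered probability space whose filtration is generated by a $d$-dimensional Brownian motion, augmented by null sets. $\tau$ is a stopping time and $L_f>0$ a constant. For $h>0$, $\pi_h=\{nh:n\in\mathbb N_0\}$, and for each $h\in(0,h_0]$ a finite $\pi_h$-valued stopping time $\tau_h$ is given. $\mathcal V(\tau_h)$ is the set of sequences $(R_t)_{t\in\pi_h}$ with $R_t\in L^2(\mathcal F_t)$ and $1_{\{t>\tau_h\}}R_t=0$ for all $t\in\pi_h$, with $\|R\|_{\tau_h}=\sum_{t\in\pi_h}\varphi(t)\|1_{\{t\le\tau_h\}}R_t\|_{L^2}$, $\varphi(t)=(1-3L_fh)^{-t/h}$. Assumptions: (h) $h_0<\min\{L_f,\frac1{12L_f}\}$ and $h\in(0,h_0]$.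 (R-q) for a parameter $q\ge2$: there is $\rho>4qL_f$ with $\exp(\rho\tau)\in L^1$ and $\sup_{h\in(0,h_0]}\exp(\rho\tau_h)\in L^1$. *)

theory Defs
  imports "HOL-Probability.Probability"
begin

definition brownian_motion :: "'a measure \<Rightarrow> (real \<Rightarrow> 'a \<Rightarrow> real ^ 'd::finite) \<Rightarrow> bool" where
  "brownian_motion M W \<longleftrightarrow>
     prob_space M
   \<and> (\<forall>t\<ge>0. W t \<in> borel_measurable M)
   \<and> (AE \<omega> in M. W 0 \<omega> = 0 \<and> continuous_on {0..} (\<lambda>t. W t \<omega>))
   \<and> (\<forall>s t. 0 \<le> s \<longrightarrow> s < t \<longrightarrow>
          prob_space.indep_vars M (\<lambda>_. borel) (\<lambda>i \<omega>. (W t \<omega> - W s \<omega>) $ i) UNIV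
        \<and> (\<forall>i. distributed M lborel (\<lambda>\<omega>. (W t \<omega> - W s \<omega>) $ i) (normal_density 0 (sqrt (t - s)))))
   \<and> (\<forall>(ts :: nat \<Rightarrow> real) n. 0 \<le> ts 0 \<longrightarrow> strict_mono ts \<longrightarrow>
          prob_space.indep_vars M (\<lambda>_. borel) (\<lambda>k \<omega>. W (ts (Suc k)) \<omega> - W (ts k) \<omega>) {..<n})"

definition brownian_filtration :: "'a measure \<Rightarrow> (real \<Rightarrow> 'a \<Rightarrow> real ^ 'd::finite) \<Rightarrow> real \<Rightarrow> 'a measure" where
  "brownian_filtration M W t = sigma (space M)
     ({W s -` B \<inter> space M | s B. 0 \<le> s \<and> s \<le> t \<and> B \<in> sets borel} \<union> null_sets M)"

definition grid :: "real \<Rightarrow> real set" where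
  "grid h = range (\<lambda>n::nat. real n * h)"

definition phi :: "real \<Rightarrow> real \<Rightarrow> real \<Rightarrow> real" where
  "phi Lf h t = (1 - 3 * Lf * h) powr (- t / h)"

definition Lp_norm :: "'a measure \<Rightarrow> real \<Rightarrow> ('a \<Rightarrow> real) \<Rightarrow> real" where
  "Lp_norm M p X = (\<integral>\<omega>. \<bar>X \<omega>\<bar> powr p \<partial>M) powr (1 / p)"

definition in_V :: "'a measure \<Rightarrow> (real \<Rightarrow> 'a measure) \<Rightarrow> real \<Rightarrow> ('a \<Rightarrow> real)
                     \<Rightarrow> (real \<Rightarrow> 'a \<Rightarrow> real) \<Rightarrow> bool" where
  "in_V M F h T R \<longleftrightarrow> (\<forall>t\<in>grid h.
      R t \<in> borel_measurable (F t)
    \<and> integrable M (\<lambda>\<omega>. (R t \<omega>)\<^sup>2)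
    \<and> (AE \<omega> in M. indicator {\<omega>. t > T \<omega>} \<omega> * R t \<omega> = 0))"

definition V_norm :: "'a measure \<Rightarrow> real \<Rightarrow> real \<Rightarrow> ('a \<Rightarrow> real) \<Rightarrow> (real \<Rightarrow> 'a \<Rightarrow> real) \<Rightarrow> ennreal" where
  "V_norm M Lf h T R = (\<Sum>n. ennreal (phi Lf h (real n * h) *
      Lp_norm M 2 (\<lambda>\<omega>. indicator {\<omega>. real n * h \<le> T \<omega>} \<omega> * R (real n * h) \<omega>)))"

end

theory Submission
  imports Defs
begin


lemma bf_space_sets:
  assumes BM: "brownian_motion M W"
  shows "space (brownian_filtration M W t) = space M \<and> sets (brownian_filtration M W t) \<subseteq> sets M"
proof -
  let ?G = "{W s -` B \<inter> space M | s B. 0 \<le> s \<and> s \<le> t \<and> B \<in> sets borel} \<union> null_sets M"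
  have meas: "\<And>s. 0 \<le> s \<Longrightarrow> W s \<in> borel_measurable M" using BM unfolding brownian_motion_def by auto
  have G: "?G \<subseteq> sets M"
  proof
    fix A assume "A \<in> ?G"
    then show "A \<in> sets M"
    proof
      assume "A \<in> {W s -` B \<inter> space M | s B. 0 \<le> s \<and> s \<le> t \<and> B \<in> sets borel}"
      then obtain s B where "A = W s -` B \<inter> space M" "0 \<le> s" "B \<in> sets borel" by blast
      then show ?thesis using measurable_sets[OF meas] by blast
    qed auto
  qed
  hence GP: "?G \<subseteq> Pow (space M)" using sets.space_closed by blast
  show ?thesis unfolding brownian_filtration_def
    using G GP by (simp add: space_measure_of_conv sets_measure_of sets.sigma_sets_subset)
qed

lemma bf_mono:
  assumes BM: "brownian_motion M W" and st: "s \<le> t"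
  shows "sets (brownian_filtration M W s) \<subseteq> sets (brownian_filtration M W t)"
proof -
  let ?G = "\<lambda>t. {W s -` B \<inter> space M | s B. 0 \<le> s \<and> s \<le> t \<and> B \<in> sets borel} \<union> null_sets M"
  have GP: "?G t \<subseteq> Pow (space M)" "?G s \<subseteq> Pow (space M)" using sets.sets_into_space by auto
  have "?G s \<subseteq> ?G t" using st by fastforce
  then show ?thesis unfolding brownian_filtration_def using GP
    by (simp add: sets_measure_of sigma_sets_mono')
qed


lemma grid_pred:
  fixes F :: "real \<Rightarrow> 'a measure"
  assumes sp: "\<And>t. space (F t) = space M"
    and mono: "\<And>s t. s \<le> t \<Longrightarrow> sets (F s) \<subseteq> sets (F t)"
    and st: "stopping_time F T" and hpos: "h > 0"
    and gr: "\<forall>\<omega>\<in>space M. T \<omega> \<in> grid h"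
    and n: "t = real n * h"
  shows "Measurable.pred (F t) (\<lambda>\<omega>. t \<le> T \<omega>)"
proof (cases n)
  case 0
  have "\<forall>\<omega>\<in>space M. T \<omega> \<ge> 0" using gr hpos by (auto simp: grid_def)
  hence "{\<omega> \<in> space (F t). t \<le> T \<omega>} = space (F t)" using n 0 sp by auto
  then show ?thesis unfolding Measurable.pred_def by (metis sets.top)
next
  case (Suc m)
  have eq: "{\<omega> \<in> space (F t). t \<le> T \<omega>} = space (F t) - {\<omega> \<in> space (F (real m * h)). T \<omega> \<le> real m * h}"
  proof -
    have "t \<le> T \<omega> \<longleftrightarrow> \<not> T \<omega> \<le> real m * h" if "\<omega> \<in> space M" for \<omega>
    proof -
      have "T \<omega> \<in> range (\<lambda>n. real n * h)" using gr that by (simp add: grid_def)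
      then obtain k :: nat where k: "T \<omega> = real k * h" by blast
      have "t \<le> T \<omega> \<longleftrightarrow> real n \<le> real k" using hpos by (simp add: n k)
      also have "\<dots> \<longleftrightarrow> \<not> real k \<le> real m" using Suc by auto
      also have "\<dots> \<longleftrightarrow> \<not> T \<omega> \<le> real m * h" using hpos by (simp add: k)
      finally show ?thesis .
    qed
    then show ?thesis using sp by auto
  qed
  have "{\<omega> \<in> space (F (real m * h)). T \<omega> \<le> real m * h} \<in> sets (F (real m * h))"
    using stopping_timeD[OF st] unfolding Measurable.pred_def by auto
  moreover have "real m * h \<le> t" using n Suc hpos by auto
  ultimately have "{\<omega> \<in> space (F (real m * h)). T \<omega> \<le> real m * h} \<in> sets (F t)" using mono by blast
  then show ?thesis unfolding Measurable.pred_def eq by auto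
qed


lemma sq_le_pow:
  fixes x p :: real assumes "p \<ge> 4"
  shows "x\<^sup>2 \<le> 1 + \<bar>x\<bar> powr p"
proof (cases "\<bar>x\<bar> \<le> 1")
  case True
  then have "x\<^sup>2 \<le> 1" by (simp add: abs_square_le_1)
  then show ?thesis by (smt (verit) powr_ge_zero)
next
  case False
  then have "\<bar>x\<bar> powr 2 \<le> \<bar>x\<bar> powr p" using assms by (intro powr_mono) auto
  moreover have "\<bar>x\<bar> powr 2 = x\<^sup>2" using False by (simp add: powr_numeral)
  ultimately show ?thesis by simp
qed

lemma sq_le_pow2:
  fixes x p a :: real assumes "p \<ge> 4" "a \<ge> 1"
  shows "x\<^sup>2 \<le> a + \<bar>x\<bar> powr p / a"
proof (cases "x\<^sup>2 \<le> a")
  case True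
  then show ?thesis using assms by (smt (verit) divide_nonneg_pos powr_ge_zero)
next
  case False
  then have x1: "\<bar>x\<bar> \<ge> 1" using assms
    using abs_square_le_1[of x] by linarith
  have "\<bar>x\<bar> powr 4 \<le> \<bar>x\<bar> powr p" using assms x1 by (intro powr_mono) auto
  moreover have "\<bar>x\<bar> powr 4 = x\<^sup>2 * x\<^sup>2" using x1 by (simp add: powr_numeral power2_eq_square) algebra
  ultimately have "x\<^sup>2 * a \<le> \<bar>x\<bar> powr p" using False
    by (smt (verit) mult_left_mono zero_le_power2)
  then have "x\<^sup>2 \<le> \<bar>x\<bar> powr p / a" using assms by (simp add: le_divide_eq)
  then show ?thesis using assms by linarith
qed

lemma abs_powr2: "\<bar>x::real\<bar> powr 2 = x\<^sup>2"
  by (cases "x = 0") (simp_all add: powr_numeral)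

theorem mainTheorem12:
  fixes M :: "'a measure" and W :: "real \<Rightarrow> 'a \<Rightarrow> real ^ 'd::finite"
    and F :: "real \<Rightarrow> 'a measure"
    and \<tau> :: "'a \<Rightarrow> real" and tauh :: "real \<Rightarrow> 'a \<Rightarrow> real"
    and Lf h0 \<rho> h :: real
  assumes BM: "brownian_motion M W"
    and F_def: "F = brownian_filtration M W"
    and tau_st: "stopping_time F \<tau>" and tau_nonneg: "\<forall>\<omega>\<in>space M. 0 \<le> \<tau> \<omega>"
    and tauh_st: "\<forall>h'\<in>{0<..h0}. stopping_time F (tauh h') \<and> (\<forall>\<omega>\<in>space M. tauh h' \<omega> \<in> grid h')"
    and Lf_pos: "Lf > 0"
    and h0: "0 < h0" "h0 < min Lf (1 / (12 * Lf))"
    and h: "h \<in> {0<..h0}"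
    and rho: "\<rho> > 4 * 4 * Lf"
    and int_tau: "integrable M (\<lambda>\<omega>. exp (\<rho> * \<tau> \<omega>))"
    and sup_meas: "(\<lambda>\<omega>. SUP h'\<in>{0<..h0}. ennreal (exp (\<rho> * tauh h' \<omega>))) \<in> borel_measurable M"
    and sup_int: "(\<integral>\<^sup>+\<omega>. (SUP h'\<in>{0<..h0}. ennreal (exp (\<rho> * tauh h' \<omega>))) \<partial>M) < \<infinity>"
  shows
    "(\<forall>(p::real) (R :: real \<Rightarrow> 'a \<Rightarrow> real).
        p \<ge> 4
      \<longrightarrow> (\<forall>t\<in>grid h. R t \<in> borel_measurable (F t) \<and> integrable M (\<lambda>\<omega>. \<bar>R t \<omega>\<bar> powr p))
      \<longrightarrow> bdd_above ((\<lambda>t. Lp_norm M p (\<lambda>\<omega>. indicator {\<omega>. t \<le> tauh h \<omega>} \<omega> * R t \<omega>)) ` grid h)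
      \<longrightarrow> in_V M F h (tauh h) (\<lambda>t \<omega>. indicator {\<omega>. t \<le> tauh h \<omega>} \<omega> * R t \<omega>)
        \<and> V_norm M Lf h (tauh h) (\<lambda>t \<omega>. indicator {\<omega>. t \<le> tauh h \<omega>} \<omega> * R t \<omega>) < \<infinity>)
   \<and> (\<forall>S :: real \<Rightarrow> 'a \<Rightarrow> real.
        in_V M F h (tauh h) S \<and> V_norm M Lf h (tauh h) S < \<infinity>
      \<longrightarrow> (\<forall>n::nat. integrable M (\<lambda>\<omega>. (1 / (1 - 3 * Lf * h)) powr (real n * h / h)
                      * indicator {\<omega>. real n * h \<le> tauh h \<omega>} \<omega> * (S (real n * h) \<omega>)\<^sup>2))
        \<and> (\<lambda>n::nat. \<integral>\<omega>. \<bar>(1 / (1 - 3 * Lf * h)) powr (real n * h / h)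
                      * indicator {\<omega>. real n * h \<le> tauh h \<omega>} \<omega> * (S (real n * h) \<omega>)\<^sup>2\<bar> \<partial>M)
            \<longlonglongrightarrow> 0)"
  
proof -
  let ?T = "tauh h"
  have hpos: "h > 0" and hle: "h \<le> h0" using h by auto
  have sp: "\<And>t. space (F t) = space M" and subM: "\<And>t. sets (F t) \<subseteq> sets M"
    using bf_space_sets[OF BM] F_def by auto
  have mono: "\<And>s t. s \<le> t \<Longrightarrow> sets (F s) \<subseteq> sets (F t)" using bf_mono[OF BM] F_def by auto
  have stT: "stopping_time F ?T" and grT: "\<forall>\<omega>\<in>space M. ?T \<omega> \<in> grid h" using tauh_st h by auto
  have Tmeas[measurable]: "?T \<in> borel_measurable M" using measurable_stopping_time[OF stT subM sp] .
  have "prob_space M" using BM brownian_motion_def by auto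
  then interpret prob_space M .
  have predA: "\<And>n. Measurable.pred (F (real n * h)) (\<lambda>\<omega>. real n * h \<le> ?T \<omega>)"
    using grid_pred[OF sp mono stT hpos grT] by blast
  have subalg: "\<And>t. subalgebra M (F t)" using sp subM by (simp add: subalgebra_def)
  have gridE: "\<And>t. t \<in> grid h \<Longrightarrow> \<exists>n. t = real n * h" by (auto simp: grid_def)
  have gridI: "\<And>n. real n * h \<in> grid h" by (auto simp: grid_def)
  have x0: "0 < Lf * h" using Lf_pos hpos by simp
  have x12: "12 * (Lf * h) < 1"
  proof -
    have "Lf * h \<le> Lf * h0" using Lf_pos hle by simp
    also have "\<dots> < Lf * (1 / (12 * Lf))" using h0 Lf_pos by (intro mult_strict_left_mono) auto
    also have "\<dots> = 1/12" using Lf_pos by simp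
    finally show ?thesis by simp
  qed
  define c where "c = 1 / (1 - 3 * Lf * h)"
  have den: "0 < 1 - 3 * Lf * h" using x12 by simp
  have c1: "c \<ge> 1" unfolding c_def using den x0 by simp
  have phi_eq: "\<And>n. phi Lf h (real n * h) = c ^ n"
    unfolding phi_def c_def using hpos den
    by (simp add: powr_minus powr_realpow power_one_over inverse_eq_divide)
  have c_eq: "\<And>n. (1 / (1 - 3 * Lf * h)) powr (real n * h / h) = c ^ n"
    unfolding c_def using hpos den by (simp add: powr_realpow)
  have Lp2: "\<And>X. Lp_norm M 2 X = sqrt (\<integral>\<omega>. (X \<omega>)\<^sup>2 \<partial>M)"
    unfolding Lp_norm_def abs_powr2 by (simp add: powr_half_sqrt)

  have P1: "\<forall>(p::real) (R :: real \<Rightarrow> 'a \<Rightarrow> real).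
        p \<ge> 4
      \<longrightarrow> (\<forall>t\<in>grid h. R t \<in> borel_measurable (F t) \<and> integrable M (\<lambda>\<omega>. \<bar>R t \<omega>\<bar> powr p))
      \<longrightarrow> bdd_above ((\<lambda>t. Lp_norm M p (\<lambda>\<omega>. indicator {\<omega>. t \<le> tauh h \<omega>} \<omega> * R t \<omega>)) ` grid h)
      \<longrightarrow> in_V M F h (tauh h) (\<lambda>t \<omega>. indicator {\<omega>. t \<le> tauh h \<omega>} \<omega> * R t \<omega>)
        \<and> V_norm M Lf h (tauh h) (\<lambda>t \<omega>. indicator {\<omega>. t \<le> tauh h \<omega>} \<omega> * R t \<omega>) < \<infinity>"
  proof (intro allI impI)
    fix p :: real and R :: "real \<Rightarrow> 'a \<Rightarrow> real"
    assume p4: "p \<ge> 4"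
      and RA: "\<forall>t\<in>grid h. R t \<in> borel_measurable (F t) \<and> integrable M (\<lambda>\<omega>. \<bar>R t \<omega>\<bar> powr p)"
      and bdd: "bdd_above ((\<lambda>t. Lp_norm M p (\<lambda>\<omega>. indicator {\<omega>. t \<le> tauh h \<omega>} \<omega> * R t \<omega>)) ` grid h)"
    define X where "X n = (\<lambda>\<omega>. indicator {\<omega>. real n * h \<le> ?T \<omega>} \<omega> * R (real n * h) \<omega>)" for n
    have Rm[measurable]: "\<And>n. R (real n * h) \<in> borel_measurable M"
      using RA gridI measurable_from_subalg[OF subalg] by blast
    have Rp: "\<And>n. integrable M (\<lambda>\<omega>. \<bar>R (real n * h) \<omega>\<bar> powr p)" using RA gridI by blast
    have XF: "X n \<in> borel_measurable (F (real n * h))" for n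
    proof -
      have "X n = (\<lambda>\<omega>. if real n * h \<le> ?T \<omega> then R (real n * h) \<omega> else 0)"
        unfolding X_def by (auto simp: indicator_def fun_eq_iff)
      also have "\<dots> \<in> borel_measurable (F (real n * h))"
        using RA gridI predA[of n] by (intro measurable_If) (auto simp: Measurable.pred_def)
      finally show ?thesis .
    qed
    have Xm[measurable]: "\<And>n. X n \<in> borel_measurable M" unfolding X_def by measurable
    have X2int: "\<And>n. integrable M (\<lambda>\<omega>. (X n \<omega>)\<^sup>2)"
    proof -
      fix n
      show "integrable M (\<lambda>\<omega>. (X n \<omega>)\<^sup>2)"
      proof (rule Bochner_Integration.integrable_bound[where f="\<lambda>\<omega>. 1 + \<bar>R (real n * h) \<omega>\<bar> powr p"])
        show "integrable M (\<lambda>\<omega>. 1 + \<bar>R (real n * h) \<omega>\<bar> powr p)" using Rp by simp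
        show "AE \<omega> in M. norm ((X n \<omega>)\<^sup>2) \<le> norm (1 + \<bar>R (real n * h) \<omega>\<bar> powr p)"
          using sq_le_pow[OF p4] by (auto simp: X_def indicator_def)
      qed simp
    qed
    have Xpint: "\<And>n. integrable M (\<lambda>\<omega>. \<bar>X n \<omega>\<bar> powr p)"
    proof -
      fix n
      show "integrable M (\<lambda>\<omega>. \<bar>X n \<omega>\<bar> powr p)"
        by (rule Bochner_Integration.integrable_bound[OF Rp[of n]]) (auto simp: X_def indicator_def)
    qed
    obtain C where C: "\<And>t. t \<in> grid h \<Longrightarrow> Lp_norm M p (\<lambda>\<omega>. indicator {\<omega>. t \<le> tauh h \<omega>} \<omega> * R t \<omega>) \<le> C"
      using bdd unfolding bdd_above_def by auto
    have Ip: "(\<integral>\<omega>. \<bar>X n \<omega>\<bar> powr p \<partial>M) \<le> C powr p" for n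
    proof -
      let ?I = "(\<integral>\<omega>. \<bar>X n \<omega>\<bar> powr p \<partial>M)"
      have I0: "0 \<le> ?I" by simp
      have "?I powr (1/p) \<le> C" using C[OF gridI[of n]] unfolding Lp_norm_def X_def .
      moreover have "0 \<le> ?I powr (1/p)" by simp
      ultimately have "(?I powr (1/p)) powr p \<le> C powr p" using p4 by (intro powr_mono2) auto
      moreover have "(?I powr (1/p)) powr p = ?I" using p4 I0 by (simp add: powr_powr)
      ultimately show ?thesis by simp
    qed
    have Eint: "integrable M (\<lambda>\<omega>. exp (\<rho> * ?T \<omega>))"
    proof (rule integrableI_bounded)
      show "(\<lambda>\<omega>. exp (\<rho> * ?T \<omega>)) \<in> borel_measurable M" by measurable
      have "(\<integral>\<^sup>+\<omega>. ennreal (norm (exp (\<rho> * ?T \<omega>))) \<partial>M)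
          \<le> (\<integral>\<^sup>+\<omega>. (SUP h'\<in>{0<..h0}. ennreal (exp (\<rho> * tauh h' \<omega>))) \<partial>M)"
        using h by (intro nn_integral_mono) (auto intro: SUP_upper)
      then show "(\<integral>\<^sup>+\<omega>. ennreal (norm (exp (\<rho> * ?T \<omega>))) \<partial>M) < \<infinity>" using sup_int by simp
    qed
    define E where "E = (\<integral>\<omega>. exp (\<rho> * ?T \<omega>) \<partial>M)"
    define K where "K = E + C powr p"
    have pw: "(X n \<omega>)\<^sup>2 \<le> exp (- \<rho> * (real n * h) / 2) * (exp (\<rho> * ?T \<omega>) + \<bar>X n \<omega>\<bar> powr p)"
      if "\<omega> \<in> space M" for n \<omega>
    proof (cases "real n * h \<le> ?T \<omega>")
      case False
      then show ?thesis by (simp add: X_def)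
    next
      case True
      define a where "a = exp (\<rho> * (real n * h) / 2)"
      have rho0: "\<rho> > 0" using rho Lf_pos by simp
      have a1: "a \<ge> 1" unfolding a_def using rho0 hpos by simp
      have s1: "(X n \<omega>)\<^sup>2 \<le> a + \<bar>X n \<omega>\<bar> powr p / a" by (rule sq_le_pow2[OF p4 a1])
      have s2: "a \<le> exp (- \<rho> * (real n * h) / 2) * exp (\<rho> * ?T \<omega>)"
      proof -
        have "exp (- \<rho> * (real n * h) / 2) * exp (\<rho> * ?T \<omega>) = exp (\<rho> * ?T \<omega> - \<rho> * (real n * h) / 2)"
          by (simp add: exp_add[symmetric])
        moreover have "\<rho> * (real n * h) / 2 \<le> \<rho> * ?T \<omega> - \<rho> * (real n * h) / 2"
          using True rho0 by (simp add: mult_left_mono mult.commute)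
        ultimately show ?thesis unfolding a_def by simp
      qed
      have s3: "\<bar>X n \<omega>\<bar> powr p / a = exp (- \<rho> * (real n * h) / 2) * \<bar>X n \<omega>\<bar> powr p"
        unfolding a_def by (simp add: exp_minus field_simps)
      show ?thesis using s1 s2 s3 by (simp add: distrib_left)
    qed
    have I2: "(\<integral>\<omega>. (X n \<omega>)\<^sup>2 \<partial>M) \<le> exp (- \<rho> * (real n * h) / 2) * K" for n
    proof -
      have "(\<integral>\<omega>. (X n \<omega>)\<^sup>2 \<partial>M) \<le> (\<integral>\<omega>. exp (- \<rho> * (real n * h) / 2) * (exp (\<rho> * ?T \<omega>) + \<bar>X n \<omega>\<bar> powr p) \<partial>M)"
        using pw X2int Eint Xpint by (intro integral_mono) auto
      also have "\<dots> = exp (- \<rho> * (real n * h) / 2) * (E + (\<integral>\<omega>. \<bar>X n \<omega>\<bar> powr p \<partial>M))"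
        unfolding E_def using Eint Xpint by simp
      also have "\<dots> \<le> exp (- \<rho> * (real n * h) / 2) * K"
        unfolding K_def using Ip[of n] by simp
      finally show ?thesis .
    qed
    define r where "r = c * exp (- \<rho> * h / 4)"
    have r0: "0 \<le> r" unfolding r_def using c1 by simp
    have r1: "r < 1"
    proof -
      have "c \<le> 1 + 4 * (Lf * h)"
      proof -
        have e: "(1 + 4 * (Lf * h)) * (1 - 3 * Lf * h) = 1 + (Lf * h) * (1 - 12 * (Lf * h))"
          by (simp add: algebra_simps)
        have "0 \<le> (Lf * h) * (1 - 12 * (Lf * h))" using x0 x12 by simp
        then have "1 \<le> (1 + 4 * (Lf * h)) * (1 - 3 * Lf * h)" using e by linarith
        then show ?thesis unfolding c_def using den by (simp add: divide_le_eq)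
      qed
      also have "\<dots> \<le> exp (4 * (Lf * h))" by (rule exp_ge_add_one_self)
      also have "\<dots> < exp (\<rho> * h / 4)" using rho hpos by simp
      finally have "c < exp (\<rho> * h / 4)" .
      then show ?thesis unfolding r_def by (simp add: exp_minus field_simps)
    qed
    have K0: "0 \<le> K" unfolding K_def E_def by (intro add_nonneg_nonneg integral_nonneg_AE) auto
    define tm where "tm n = phi Lf h (real n * h) * Lp_norm M 2 (\<lambda>\<omega>. indicator {\<omega>. real n * h \<le> ?T \<omega>} \<omega> * X n \<omega>)" for n
    have tm_eq: "tm n = c^n * sqrt (\<integral>\<omega>. (X n \<omega>)\<^sup>2 \<partial>M)" for n
    proof -
      have eq: "(\<lambda>\<omega>. indicator {\<omega>. real n * h \<le> ?T \<omega>} \<omega> * X n \<omega>) = X n"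
        by (auto simp: X_def indicator_def fun_eq_iff)
      show ?thesis by (simp only: tm_def phi_eq Lp2 eq)
    qed
    have tm_nn: "\<And>n. 0 \<le> tm n" unfolding tm_eq using c1 by simp
    have tm_le: "tm n \<le> sqrt K * r ^ n" for n
    proof -
      have "sqrt (\<integral>\<omega>. (X n \<omega>)\<^sup>2 \<partial>M) \<le> sqrt (exp (- \<rho> * (real n * h) / 2) * K)"
        using I2[of n] by simp
      also have "\<dots> = exp (- \<rho> * (real n * h) / 4) * sqrt K"
      proof -
        have "sqrt (exp (- \<rho> * (real n * h) / 2)) = exp (- \<rho> * (real n * h) / 4)"
          by (rule real_sqrt_unique) (simp_all add: power2_eq_square exp_add[symmetric])
        then show ?thesis by (simp add: real_sqrt_mult)
      qed
      finally have "tm n \<le> c^n * (exp (- \<rho> * (real n * h) / 4) * sqrt K)"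
        unfolding tm_eq using c1 by (intro mult_left_mono) auto
      also have "\<dots> = sqrt K * r ^ n"
      proof -
        have "exp (- \<rho> * (real n * h) / 4) = exp (- \<rho> * h / 4) ^ n"
          by (subst exp_of_nat_mult[symmetric]) (simp add: algebra_simps)
        then show ?thesis unfolding r_def by (simp add: power_mult_distrib)
      qed
      finally show ?thesis .
    qed
    have "summable tm"
    proof (rule summable_comparison_test')
      show "summable (\<lambda>n. sqrt K * r ^ n)" using r0 r1 by (intro summable_mult summable_geometric) simp
      show "norm (tm n) \<le> sqrt K * r ^ n" for n using tm_nn tm_le by simp
    qed
    have "V_norm M Lf h ?T (\<lambda>t \<omega>. indicator {\<omega>. t \<le> tauh h \<omega>} \<omega> * R t \<omega>) = (\<Sum>n. ennreal (tm n))"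
      unfolding V_norm_def tm_def X_def ..
    also have "\<dots> = ennreal (\<Sum>n. tm n)" using tm_nn \<open>summable tm\<close> by (rule suminf_ennreal2)
    finally have Vfin: "V_norm M Lf h ?T (\<lambda>t \<omega>. indicator {\<omega>. t \<le> tauh h \<omega>} \<omega> * R t \<omega>) < \<infinity>" by simp
    have inV: "in_V M F h ?T (\<lambda>t \<omega>. indicator {\<omega>. t \<le> tauh h \<omega>} \<omega> * R t \<omega>)"
      unfolding in_V_def
    proof
      fix t assume "t \<in> grid h"
      then obtain n where tn: "t = real n * h" using gridE by blast
      show "(\<lambda>\<omega>. indicator {\<omega>. t \<le> tauh h \<omega>} \<omega> * R t \<omega>) \<in> borel_measurable (F t) \<and>
          integrable M (\<lambda>\<omega>. ((\<lambda>\<omega>. indicator {\<omega>. t \<le> tauh h \<omega>} \<omega> * R t \<omega>) \<omega>)\<^sup>2) \<and>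
          (AE \<omega> in M. indicator {\<omega>. tauh h \<omega> < t} \<omega> * (\<lambda>\<omega>. indicator {\<omega>. t \<le> tauh h \<omega>} \<omega> * R t \<omega>) \<omega> = 0)"
        using XF[of n] X2int[of n] unfolding tn X_def by (auto simp: indicator_def)
    qed
    show "in_V M F h ?T (\<lambda>t \<omega>. indicator {\<omega>. t \<le> tauh h \<omega>} \<omega> * R t \<omega>) \<and>
        V_norm M Lf h ?T (\<lambda>t \<omega>. indicator {\<omega>. t \<le> tauh h \<omega>} \<omega> * R t \<omega>) < \<infinity>"
      using inV Vfin by simp
  qed
  show ?thesis
  proof (rule conjI[OF P1], intro allI impI, rule conjI)
    fix S :: "real \<Rightarrow> 'a \<Rightarrow> real"
    assume SV: "in_V M F h (tauh h) S \<and> V_norm M Lf h (tauh h) S < \<infinity>"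
    have Sm[measurable]: "\<And>n. S (real n * h) \<in> borel_measurable M"
      using SV gridI measurable_from_subalg[OF subalg] unfolding in_V_def by blast
    have S2: "\<And>n. integrable M (\<lambda>\<omega>. (S (real n * h) \<omega>)\<^sup>2)"
      using SV gridI unfolding in_V_def by blast
    define Y where "Y n = (\<lambda>\<omega>. indicator {\<omega>. real n * h \<le> ?T \<omega>} \<omega> * S (real n * h) \<omega>)" for n
    have Ym[measurable]: "\<And>n. Y n \<in> borel_measurable M" unfolding Y_def by measurable
    have Y2int: "\<And>n. integrable M (\<lambda>\<omega>. (Y n \<omega>)\<^sup>2)"
      by (rule Bochner_Integration.integrable_bound[OF S2]) (auto simp: Y_def indicator_def)
    have Yeq: "\<And>n \<omega>. (1 / (1 - 3 * Lf * h)) powr (real n * h / h)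
                      * indicator {\<omega>. real n * h \<le> tauh h \<omega>} \<omega> * (S (real n * h) \<omega>)\<^sup>2 = c^n * (Y n \<omega>)\<^sup>2"
      unfolding c_eq Y_def by (simp add: indicator_def)
    show "\<forall>n::nat. integrable M (\<lambda>\<omega>. (1 / (1 - 3 * Lf * h)) powr (real n * h / h)
                      * indicator {\<omega>. real n * h \<le> tauh h \<omega>} \<omega> * (S (real n * h) \<omega>)\<^sup>2)"
      unfolding Yeq using Y2int by simp
    define tm where "tm n = phi Lf h (real n * h) * Lp_norm M 2 (Y n)" for n
    have tm_eq: "tm n = c^n * sqrt (\<integral>\<omega>. (Y n \<omega>)\<^sup>2 \<partial>M)" for n
      unfolding tm_def phi_eq Lp2 ..
    have tm_nn: "\<And>n. 0 \<le> tm n" unfolding tm_eq using c1 by simp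
    have "V_norm M Lf h ?T S = (\<Sum>n. ennreal (tm n))"
      unfolding V_norm_def tm_def Y_def ..
    then have "summable tm" using SV tm_nn by (intro summable_suminf_not_top) auto
    then have "tm \<longlonglongrightarrow> 0" by (rule summable_LIMSEQ_zero)
    then have tm2: "(\<lambda>n. (tm n)\<^sup>2) \<longlonglongrightarrow> 0" using tendsto_power[of tm 0 sequentially 2] by simp
    show "(\<lambda>n::nat. \<integral>\<omega>. \<bar>(1 / (1 - 3 * Lf * h)) powr (real n * h / h)
                      * indicator {\<omega>. real n * h \<le> tauh h \<omega>} \<omega> * (S (real n * h) \<omega>)\<^sup>2\<bar> \<partial>M)
            \<longlonglongrightarrow> 0"
    proof (rule Lim_null_comparison[OF _ tm2], intro always_eventually allI)
      fix n
      have I0: "0 \<le> (\<integral>\<omega>. (Y n \<omega>)\<^sup>2 \<partial>M)" by simp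
      have cn: "c^n \<le> c^n * c^n" using c1 by simp
      have "norm (\<integral>\<omega>. \<bar>c^n * (Y n \<omega>)\<^sup>2\<bar> \<partial>M) = c^n * (\<integral>\<omega>. (Y n \<omega>)\<^sup>2 \<partial>M)"
        using c1 by simp
      also have "\<dots> \<le> (c^n * c^n) * (\<integral>\<omega>. (Y n \<omega>)\<^sup>2 \<partial>M)" using cn I0 by (rule mult_right_mono)
      also have "\<dots> = (tm n)\<^sup>2" unfolding tm_eq using I0 by (simp add: power_mult_distrib power2_eq_square)
      finally show "norm (\<integral>\<omega>. \<bar>(1 / (1 - 3 * Lf * h)) powr (real n * h / h)
                      * indicator {\<omega>. real n * h \<le> tauh h \<omega>} \<omega> * (S (real n * h) \<omega>)\<^sup>2\<bar> \<partial>M) \<le> (tm n)\<^sup>2"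
        unfolding Yeq .
    qed
  qed
qed

end
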